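(* Let $G$ be a graph of maximum degree at most $3$. Then $G$ has a matching $M$ such that the multigraph $G/M$ obtained by contracting all edges of $M$ (keeping parallel edges) is bipartite. *)

theory Defs
  imports Main
begin

definition simple_graph :: "'a set \<Rightarrow> 'a set set \<Rightarrow> bool" where
  "simple_graph V E \<longleftrightarrow> finite V \<and> (\<forall>e\<in>E. e \<subseteq> V \<and> card e = 2)"

definition degree :: "'a set set \<Rightarrow> 'a \<Rightarrow> nat" where
  "degree E v = card {e\<in>E. v \<in> e}"

definition matching :: "'a set set \<Rightarrow> 'a set set \<Rightarrow> bool" where
  "matching E M \<longleftrightarrow> M \<subseteq> E \<and> (\<forall>e1\<in>M. \<forall>e2\<in>M. e1 \<noteq> e2 \<longrightarrow> e1 \<inter> e2 = {})"

definition contract_vertex :: "'a set set \<Rightarrow> 'a \<Rightarrow> 'a set" where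
  "contract_vertex M v = (if \<exists>e\<in>M. v \<in> e then (THE e. e \<in> M \<and> v \<in> e) else {v})"

text \<open>Multigraph given by vertex set VV, edge index set EE and endpoint map ends
  (ends e is a 1-element set for a loop, a 2-element set otherwise).\<close>
definition bipartite_multigraph :: "'v set \<Rightarrow> 'e set \<Rightarrow> ('e \<Rightarrow> 'v set) \<Rightarrow> bool" where
  "bipartite_multigraph VV EE ends \<longleftrightarrow>
     (\<exists>A B. A \<inter> B = {} \<and> A \<union> B = VV \<and> (\<forall>e\<in>EE. \<exists>a\<in>A. \<exists>b\<in>B. ends e = {a, b}))"

text \<open>The multigraph G/M: contract every edge of M, keep all other edges
  (as distinct, possibly parallel, edges indexed by E - M).\<close>
definition contraction_bipartite :: "'a set \<Rightarrow> 'a set set \<Rightarrow> 'a set set \<Rightarrow> bool" where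
  "contraction_bipartite V E M \<longleftrightarrow>
     bipartite_multigraph (contract_vertex M ` V) (E - M) (\<lambda>e. contract_vertex M ` e)"

end

theory Submission
  imports Defs
begin

definition crossing :: "'a set \<Rightarrow> 'a set \<Rightarrow> bool" where
  "crossing A e \<longleftrightarrow> e \<inter> A \<noteq> {} \<and> e \<inter> - A \<noteq> {}"

lemma crossing_compl: "crossing (- A) e = crossing A e"
  unfolding crossing_def by auto

lemma split_card:
  assumes "finite S" shows "card S = card (S - D) + card (S \<inter> D)"
proof -
  have "S = (S - D) \<union> (S \<inter> D)" by auto
  hence "card S = card ((S - D) \<union> (S \<inter> D))" by simp
  also have "\<dots> = card (S - D) + card (S \<inter> D)"
    by (rule card_Un_disjoint) (use assms in auto)
  finally show ?thesis .
qed

lemma improve: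
  fixes E :: "'a set set"
  assumes fin: "finite E" and deg: "card {e\<in>E. v\<in>e} \<le> 3" and v: "v \<in> A"
    and e1: "e1 \<in> E" "v \<in> e1" "e1 \<subseteq> A" "card e1 = 2"
    and e2: "e2 \<in> E" "v \<in> e2" "e2 \<subseteq> A" "card e2 = 2"
    and ne: "e1 \<noteq> e2"
  shows "card {e\<in>E. crossing A e} < card {e\<in>E. crossing (A - {v}) e}"
proof -
  define D where "D = {e\<in>E. v\<in>e}"
  define C where "C = {e\<in>E. crossing A e}"
  define C' where "C' = {e\<in>E. crossing (A - {v}) e}"
  have finD: "finite D" using fin unfolding D_def by auto
  have eq: "C - D = C' - D"
    unfolding C_def C'_def D_def crossing_def by blast
  have "e1 \<in> D" "e2 \<in> D" using e1 e2 unfolding D_def by auto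
  have cr: "crossing (A - {v}) e" if "v \<in> e" "e \<subseteq> A" "card e = 2" for e
  proof -
    obtain a b where "a \<noteq> b" "e = {a,b}" using \<open>card e = 2\<close> by (meson card_2_iff)
    then show ?thesis using that unfolding crossing_def by auto
  qed
  have "{e1,e2} \<subseteq> C' \<inter> D"
    using cr e1 e2 \<open>e1 \<in> D\<close> \<open>e2 \<in> D\<close> unfolding C'_def by auto
  hence "card {e1,e2} \<le> card (C' \<inter> D)" using finD by (intro card_mono) auto
  hence c2: "2 \<le> card (C' \<inter> D)" using ne by simp
  have "C \<inter> D \<subseteq> D - {e1,e2}"
    using e1 e2 unfolding C_def crossing_def by auto
  hence "card (C \<inter> D) \<le> card (D - {e1,e2})" using finD by (intro card_mono) auto
  also have "\<dots> = card D - 2"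
    using \<open>e1 \<in> D\<close> \<open>e2 \<in> D\<close> ne finD by (simp add: card_Diff_subset)
  finally have c1: "card (C \<inter> D) \<le> 1" using deg unfolding D_def by simp
  have "card C = card (C - D) + card (C \<inter> D)"
    by (rule split_card) (use fin in \<open>simp add: C_def\<close>)
  moreover have "card C' = card (C' - D) + card (C' \<inter> D)"
    by (rule split_card) (use fin in \<open>simp add: C'_def\<close>)
  ultimately have "card C < card C'" using eq c1 c2 by simp
  thus ?thesis unfolding C_def C'_def .
qed

theorem mainTheorem6:
  fixes V :: "'a set" and E :: "'a set set"
  assumes "simple_graph V E"
    and "\<forall>v\<in>V. degree E v \<le> 3"
  shows "\<exists>M. matching E M \<and> contraction_bipartite V E M"
proof -
  have finV: "finite V" and Esub: "\<And>e. e \<in> E \<Longrightarrow> e \<subseteq> V"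
    and Ecard: "\<And>e. e \<in> E \<Longrightarrow> card e = 2"
    using assms(1) unfolding simple_graph_def by auto
  have finE: "finite E"
    by (rule finite_subset[of E "Pow V"]) (use Esub finV in auto)
  define g where "g A = card {e\<in>E. crossing A e}" for A
  have "finite (g ` Pow V)" using finV by simp
  moreover have "g ` Pow V \<noteq> {}" by auto
  ultimately have "Max (g ` Pow V) \<in> g ` Pow V" by (rule Max_in)
  then obtain A where A: "A \<subseteq> V" "g A = Max (g ` Pow V)" by auto
  have Amax: "g B \<le> g A" if "B \<subseteq> V" for B
    using A(2) \<open>finite (g ` Pow V)\<close> that by auto
  have degv: "card {e\<in>E. v\<in>e} \<le> 3" if "v \<in> V" for v
    using assms(2) that unfolding degree_def by auto
  have uniqA: "e1 = e2" if "v \<in> A" "e1 \<in> E" "v \<in> e1" "e1 \<subseteq> A" "e2 \<in> E" "v \<in> e2" "e2 \<subseteq> A" for v e1 e2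
  proof (rule ccontr)
    assume "e1 \<noteq> e2"
    have "g A < g (A - {v})" unfolding g_def
      by (rule improve) (use that finE degv Ecard \<open>e1 \<noteq> e2\<close> A(1) in auto)
    moreover have "g (A - {v}) \<le> g A" using A(1) by (intro Amax) auto
    ultimately show False by simp
  qed
  have uniqB: "e1 = e2" if "v \<in> V" "v \<in> - A" "e1 \<in> E" "v \<in> e1" "e1 \<subseteq> - A" "e2 \<in> E" "v \<in> e2" "e2 \<subseteq> - A" for v e1 e2
  proof (rule ccontr)
    assume "e1 \<noteq> e2"
    have "card {e\<in>E. crossing (- A) e} < card {e\<in>E. crossing (- A - {v}) e}"
      by (rule improve) (use that finE degv Ecard \<open>e1 \<noteq> e2\<close> in auto)
    moreover have "- A - {v} = - (A \<union> {v})" by auto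
    ultimately have "g A < g (A \<union> {v})" unfolding g_def by (simp add: crossing_compl)
    moreover have "g (A \<union> {v}) \<le> g A" using A(1) that by (intro Amax) auto
    ultimately show False by simp
  qed
  define M where "M = {e\<in>E. e \<subseteq> A \<or> e \<subseteq> - A}"
  have matchM: "matching E M"
    unfolding matching_def
  proof (intro conjI ballI impI)
    show "M \<subseteq> E" unfolding M_def by auto
  next
    fix e1 e2 assume h: "e1 \<in> M" "e2 \<in> M" "e1 \<noteq> e2"
    show "e1 \<inter> e2 = {}"
    proof (rule ccontr)
      assume "e1 \<inter> e2 \<noteq> {}"
      then obtain v where v: "v \<in> e1" "v \<in> e2" by auto
      have "v \<in> V" using h v Esub unfolding M_def by auto
      show False
      proof (cases "v \<in> A")
        case True
        then have "e1 \<subseteq> A" "e2 \<subseteq> A" using h v unfolding M_def by auto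
        then show False using uniqA[OF True _ v(1) _ _ v(2)] h unfolding M_def by auto
      next
        case False
        then have "e1 \<subseteq> - A" "e2 \<subseteq> - A" using h v unfolding M_def by auto
        then show False using uniqB[OF \<open>v \<in> V\<close> _ _ v(1) _ _ v(2)] h False unfolding M_def by auto
      qed
    qed
  qed
  have cv: "v \<in> contract_vertex M v \<and> (contract_vertex M v \<subseteq> A \<or> contract_vertex M v \<subseteq> - A)" for v
  proof (cases "\<exists>e\<in>M. v \<in> e")
    case True
    then obtain e where e: "e \<in> M" "v \<in> e" by auto
    have "(THE e. e \<in> M \<and> v \<in> e) = e"
    proof (rule the_equality)
      show "e \<in> M \<and> v \<in> e" using e by simp
      fix e' assume "e' \<in> M \<and> v \<in> e'"
      then show "e' = e" using matchM e unfolding matching_def by blast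
    qed
    then have "contract_vertex M v = e" using True unfolding contract_vertex_def by simp
    then show ?thesis using e unfolding M_def by auto
  next
    case False
    then show ?thesis unfolding contract_vertex_def by auto
  qed
  have cvA: "contract_vertex M v \<subseteq> A" if "v \<in> A" for v using cv[of v] that by auto
  have cvB: "contract_vertex M v \<subseteq> - A" if "v \<notin> A" for v using cv[of v] that by auto
  have "contraction_bipartite V E M"
    unfolding contraction_bipartite_def bipartite_multigraph_def
  proof (intro exI conjI ballI)
    let ?PA = "contract_vertex M ` (V \<inter> A)"
    let ?PB = "contract_vertex M ` (V - A)"
    show "?PA \<inter> ?PB = {}"
    proof (rule ccontr)
      assume "?PA \<inter> ?PB \<noteq> {}"
      then obtain x y where xy: "x \<in> A" "y \<notin> A" "contract_vertex M x = contract_vertex M y" by auto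
      have "x \<in> contract_vertex M y" using cv[of x] xy(3) by simp
      then show False using cvB[OF xy(2)] xy(1) by auto
    qed
    show "?PA \<union> ?PB = contract_vertex M ` V" by auto
    fix e assume e: "e \<in> E - M"
    then have "\<not> (e \<subseteq> A \<or> e \<subseteq> - A)" unfolding M_def by auto
    then obtain a b where ab: "a \<in> e" "a \<in> A" "b \<in> e" "b \<notin> A" by auto
    have "a \<noteq> b" using ab by auto
    have "e = {a,b}"
    proof -
      have "{a,b} \<subseteq> e" using ab by auto
      moreover have "card {a,b} = card e" using Ecard e \<open>a \<noteq> b\<close> by auto
      moreover have "finite e" using Esub e finV by (meson DiffD1 finite_subset)
      ultimately show ?thesis by (metis card_subset_eq)
    qed
    then have "contract_vertex M ` e = {contract_vertex M a, contract_vertex M b}" by simp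
    moreover have "contract_vertex M a \<in> ?PA" using ab e Esub by auto
    moreover have "contract_vertex M b \<in> ?PB" using ab e Esub by auto
    ultimately show "\<exists>a\<in>?PA. \<exists>b\<in>?PB. contract_vertex M ` e = {a, b}" by blast
  qed
  with matchM show ?thesis by blast
qed

end
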